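(* For every nonzero $\lambda\in\mathbb{C}$, the function $f_\lambda(t)=\frac{1}{(1-\lambda t)(1-\lambda^{-1}t)}$ is symplectic at $t=1$ of order $2$.
   Context: A formal power series $\varphi(x)=\sum_{i\ge0}\gamma_i x^i\in\mathbb{C}[[x]]$ is called symplectic if for every $m\ge1$ one has $\sum_{k=0}^{m-1}(-1)^k\binom{m-1}{k}\gamma_{m+k}=0$. A meromorphic function $\psi(t)$ whose pole at $t=a$ has order at most $d$ is called symplectic at $a$ of order $d$ if the formal power series $x^d\psi(a-x)\in\mathbb{C}[[x]]$ is symplectic. *)

theory Defs
  imports "HOL-Complex_Analysis.Complex_Analysis"
begin

definition symplectic_fps :: "complex fps \<Rightarrow> bool" where
  "symplectic_fps \<phi> \<longleftrightarrow>
     (\<forall>m::nat. m \<ge> 1 \<longrightarrow>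
        (\<Sum>k<m. (-1) ^ k * of_nat ((m - 1) choose k) * fps_nth \<phi> (m + k)) = 0)"

definition symplectic_at :: "(complex \<Rightarrow> complex) \<Rightarrow> complex \<Rightarrow> nat \<Rightarrow> bool" where
  "symplectic_at \<psi> a d \<longleftrightarrow>
     (\<exists>\<phi>. ((\<lambda>x. x ^ d * \<psi> (a - x)) has_laurent_expansion fps_to_fls \<phi>)
          \<and> symplectic_fps \<phi>)"

end

theory Submission
  imports Defs
begin
lemma geo_exp:
  fixes b c :: complex
  assumes "c \<noteq> 0"
  shows "(\<lambda>x. inverse (c + b*x)) has_laurent_expansion fps_to_fls (Abs_fps (\<lambda>n. (-b)^n / c^(Suc n)))"
proof -
  define A where "A = Abs_fps (\<lambda>n. (-b)^n / c^(Suc n))"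
  have 1: "(\<lambda>x. c + b*x) has_laurent_expansion fls_const c + fls_const b * fls_X"
    by (intro laurent_expansion_intros)
  have "(fps_const c + fps_const b * fps_X) * A = 1"
  proof (rule fps_ext)
    fix n
    show "fps_nth ((fps_const c + fps_const b * fps_X) * A) n = fps_nth 1 n"
      using assms by (cases n) (auto simp: A_def distrib_right mult.assoc field_simps)
  qed
  hence "(fls_const c + fls_const b * fls_X) * fps_to_fls A = 1"
    by (metis fls_times_fps_to_fls fps_X_to_fls fps_const_to_fls fps_to_fls_plus fps_to_fls_eq_1_iff)
  hence "inverse (fls_const c + fls_const b * fls_X) = fps_to_fls A"
    by (metis inverse_unique)
  with has_laurent_expansion_inverse[OF 1] show ?thesis unfolding A_def by simp
qed

lemma lin_sum:
  fixes y :: complex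
  shows "(\<Sum>k\<le>n. of_nat k * of_nat (n choose k) * y^k) = of_nat n * y * (1+y)^(n-1)"
proof (cases n)
  case 0 then show ?thesis by simp
next
  case (Suc p)
  have "(\<Sum>k\<le>Suc p. of_nat k * of_nat (Suc p choose k) * y^k)
      = (\<Sum>k\<le>p. of_nat (Suc k) * of_nat (Suc p choose Suc k) * y^Suc k)"
    by (subst sum.atMost_Suc_shift) simp
  also have "\<dots> = (\<Sum>k\<le>p. of_nat (Suc p) * y * (of_nat (p choose k) * y^k * 1^(p-k)))"
  proof (rule sum.cong[OF refl])
    fix k
    have "of_nat (Suc k) * of_nat (Suc p choose Suc k) = (of_nat (Suc p) * of_nat (p choose k) :: complex)"
      by (metis Suc_times_binomial of_nat_mult)
    then show "of_nat (Suc k) * of_nat (Suc p choose Suc k) * y^Suc k = of_nat (Suc p) * y * (of_nat (p choose k) * y^k * 1^(p-k))"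
      by (simp add: algebra_simps)
  qed
  also have "\<dots> = of_nat (Suc p) * y * (y+1)^p"
    by (simp add: sum_distrib_left[symmetric] binomial_ring)
  finally show ?thesis using Suc by (simp add: add.commute)
qed

lemma Q_zero:
  fixes l c :: complex
  assumes "c = 1 - l" "c \<noteq> 0" "l \<noteq> 0"
  shows "(\<Sum>k\<le>n. of_nat (n choose k) * (- inverse c)^k * (\<Sum>i<n+k. (-l)^i)) = 0"
proof (cases "l = -1")
  case True
  then have c2: "c = 2" using assms by simp
  have "(\<Sum>k\<le>n. of_nat (n choose k) * (- inverse c)^k * (\<Sum>i<n+k. (-l)^i))
      = (\<Sum>k\<le>n. of_nat n * (of_nat (n choose k) * (- 1/2)^k * 1^(n-k)) + of_nat k * of_nat (n choose k) * (-1/2::complex)^k)"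
    using True c2 by (intro sum.cong refl) (simp add: algebra_simps)
  also have "\<dots> = of_nat n * (-1/2 + 1)^n + of_nat n * (-1/2) * (1 + (-1/2))^(n-1)"
  proof -
    have b: "(\<Sum>k\<le>n. of_nat (n choose k) * (-1/2::complex)^k * 1^(n-k)) = (-1/2 + 1)^n"
      by (rule binomial_ring[symmetric])
    show ?thesis
      by (simp only: sum.distrib sum_distrib_left[symmetric] b lin_sum)
  qed
  also have "\<dots> = 0"
    by (cases n) (simp_all add: field_simps)
  finally show ?thesis .
next
  case False
  have nz: "1 + l \<noteq> 0" using False by (metis add_eq_0_iff)
  have S: "(\<Sum>i<p. (-l)^i) = (1 - (-l)^p) / (1 + l)" for p
  proof -
    have "-l \<noteq> 1" using False by (metis minus_minus)
    then show ?thesis using nz by (subst sum_gp_strict) (simp add: diff_minus_eq_add)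
  qed
  have "(\<Sum>k\<le>n. of_nat (n choose k) * (- inverse c)^k * (\<Sum>i<n+k. (-l)^i))
      = (\<Sum>k\<le>n. (of_nat (n choose k) * (- inverse c)^k * 1^(n-k)
            - (-l)^n * (of_nat (n choose k) * (l * inverse c)^k * 1^(n-k)))) / (1 + l)"
    unfolding S sum_divide_distrib
  proof (intro sum.cong refl)
    fix k
    have e: "(-l)^k * (- inverse c)^k = (l * inverse c)^k"
      by (metis power_mult_distrib minus_mult_minus)
    hence e2: "l^k * inverse c^k = (-l)^k * (- inverse c)^k" by (simp add: power_mult_distrib)
    show "of_nat (n choose k) * (- inverse c)^k * ((1 - (-l)^(n+k)) / (1 + l)) =
        (of_nat (n choose k) * (- inverse c)^k * 1^(n-k)
            - (-l)^n * (of_nat (n choose k) * (l * inverse c)^k * 1^(n-k))) / (1 + l)"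
      by (simp add: algebra_simps power_add e2)
  qed
  also have "\<dots> = ((- inverse c + 1)^n - (-l)^n * (l * inverse c + 1)^n) / (1 + l)"
  proof -
    have b1: "(\<Sum>k\<le>n. of_nat (n choose k) * (- inverse c)^k * 1^(n-k)) = (- inverse c + 1)^n"
      by (rule binomial_ring[symmetric])
    have b2: "(\<Sum>k\<le>n. of_nat (n choose k) * (l * inverse c)^k * 1^(n-k)) = (l * inverse c + 1)^n"
      by (rule binomial_ring[symmetric])
    show ?thesis by (simp only: sum_subtractf sum_distrib_left[symmetric] b1 b2)
  qed
  also have "- inverse c + 1 = (-l) * inverse c"
  proof -
    have "- inverse c + 1 = (c - 1) * inverse c" using assms(2) by (simp add: field_simps)
    also have "c - 1 = -l" using assms(1) by simp
    finally show ?thesis .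
  qed
  also have "l * inverse c + 1 = inverse c"
  proof -
    have "l * inverse c + 1 = (l + c) * inverse c" using assms(2) by (simp add: field_simps)
    also have "l + c = 1" using assms(1) by simp
    finally show ?thesis by simp
  qed
  finally show ?thesis by (simp only: power_mult_distrib diff_self div_0)
qed

lemma main_ne1:
  fixes l :: complex
  assumes "l \<noteq> 0" "l \<noteq> 1"
  shows "symplectic_at (\<lambda>t. 1 / ((1 - l * t) * (1 - inverse l * t))) 1 2"
proof -
  define c where "c = 1 - l"
  have c0: "c \<noteq> 0" using assms unfolding c_def by simp
  define A where "A = Abs_fps (\<lambda>n. (-l)^n / c^(Suc n))"
  define B where "B = Abs_fps (\<lambda>n. (-(-1::complex))^n / c^(Suc n))"
  define \<phi> where "\<phi> = fps_const (-l) * (fps_X^2 * (A * B))"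
  have eA: "(\<lambda>x. inverse (c + l*x)) has_laurent_expansion fps_to_fls A"
    unfolding A_def by (rule geo_exp[OF c0])
  have eB: "(\<lambda>x. inverse (c + (-1)*x)) has_laurent_expansion fps_to_fls B"
    unfolding B_def by (rule geo_exp[OF c0])
  have e: "(\<lambda>x. (-l) * (x^2 * (inverse (c + l*x) * inverse (c + (-1)*x)))) has_laurent_expansion fps_to_fls \<phi>"
  proof -
    have X2: "(\<lambda>x::complex. x^2) has_laurent_expansion fls_X^2"
      by (intro has_laurent_expansion_power has_laurent_expansion_fps_X)
    have "(\<lambda>x. x^2 * (inverse (c + l*x) * inverse (c + (-1)*x))) has_laurent_expansion fls_X^2 * (fps_to_fls A * fps_to_fls B)"
      by (intro has_laurent_expansion_mult X2 eA eB)
    then have "(\<lambda>x. (-l) * (x^2 * (inverse (c + l*x) * inverse (c + (-1)*x)))) has_laurent_expansion fls_const (-l) * (fls_X^2 * (fps_to_fls A * fps_to_fls B))"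
      by (rule has_laurent_expansion_cmult_left)
    then show ?thesis
      by (simp add: \<phi>_def fls_times_fps_to_fls fps_to_fls_power)
  qed
  have fun_eq: "x^2 * (1 / ((1 - l * (1 - x)) * (1 - inverse l * (1 - x))))
      = (-l) * (x^2 * (inverse (c + l*x) * inverse (c + (-1)*x)))" for x :: complex
  proof -
    have 1: "1 - l * (1 - x) = c + l*x" unfolding c_def by (simp add: algebra_simps)
    have 2: "1 - inverse l * (1 - x) = (- inverse l) * (c + (-1)*x)"
      using assms(1) unfolding c_def by (simp add: field_simps)
    show ?thesis unfolding 1 2
      using assms(1) by (simp add: inverse_mult_distrib divide_inverse)
  qed
  have e2: "(\<lambda>x. x^2 * (1 / ((1 - l * (1 - x)) * (1 - inverse l * (1 - x))))) has_laurent_expansion fps_to_fls \<phi>"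
    using e unfolding fun_eq .
  have AB: "fps_nth (A * B) n = (\<Sum>i\<le>n. (-l)^i) / c^(n+2)" for n
  proof -
    have "fps_nth (A * B) n = (\<Sum>i=0..n. (-l)^i / c^(n+2))"
      unfolding fps_mult_nth
    proof (intro sum.cong refl)
      fix i assume "i \<in> {0..n}"
      then have "c^Suc i * c^Suc (n-i) = c^(n+2)" by (simp add: power_add[symmetric])
      then show "fps_nth A i * fps_nth B (n - i) = (-l)^i / c^(n+2)"
        unfolding A_def B_def using c0 by (simp add: field_simps)
    qed
    then show ?thesis by (simp add: atLeast0AtMost sum_divide_distrib)
  qed
  have phi: "fps_nth \<phi> j = (if j = 0 then 0 else -l * (\<Sum>i<j-1. (-l)^i) / c^j)" for j
  proof (cases "j < 2")
    case True
    then show ?thesis by (cases j) (auto simp: \<phi>_def fps_X_power_mult_nth)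
  next
    case False
    then have "{..j-2} = {..<j-1}" by auto
    moreover have "c * (c * c^(j-2)) = c^j"
    proof -
      obtain q where "j = Suc (Suc q)" using False by (metis add_2_eq_Suc le_add_diff_inverse not_less)
      then show ?thesis by simp
    qed
    ultimately show ?thesis using False
      by (simp add: \<phi>_def fps_X_power_mult_nth AB)
  qed
  have sym: "symplectic_fps \<phi>"
    unfolding symplectic_fps_def
  proof (intro allI impI)
    fix m :: nat assume "m \<ge> 1"
    then obtain n where m: "m = Suc n" by (cases m) auto
    have "(\<Sum>k<m. (-1) ^ k * of_nat ((m - 1) choose k) * fps_nth \<phi> (m + k))
        = (\<Sum>k\<le>n. (-l / c^Suc n) * (of_nat (n choose k) * (- inverse c)^k * (\<Sum>i<n+k. (-l)^i)))"
      unfolding m lessThan_Suc_atMost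
    proof (intro sum.cong refl)
      fix k
      have p: "(- inverse c)^k = (-1)^k * inverse c ^ k" by (simp add: power_mult_distrib[symmetric])
      show "(-1) ^ k * of_nat ((Suc n - 1) choose k) * fps_nth \<phi> (Suc n + k) =
          (-l / c^Suc n) * (of_nat (n choose k) * (- inverse c)^k * (\<Sum>i<n+k. (-l)^i))"
        unfolding phi p using c0 by (simp add: power_add field_simps)
    qed
    also have "\<dots> = 0"
      by (simp only: sum_distrib_left[symmetric] Q_zero[OF c_def c0 assms(1)] mult_zero_right)
    finally show "(\<Sum>k<m. (-1) ^ k * of_nat ((m - 1) choose k) * fps_nth \<phi> (m + k)) = 0" .
  qed
  show ?thesis unfolding symplectic_at_def using e2 sym by auto
qed

lemma main_1:
  shows "symplectic_at (\<lambda>t. 1 / ((1 - (1::complex) * t) * (1 - inverse 1 * t))) 1 2"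
proof -
  have ev: "eventually (\<lambda>x::complex. 1 = x^2 * (1 / ((1 - 1 * (1 - x)) * (1 - inverse 1 * (1 - x))))) (at 0)"
    by (rule eventually_mono[OF eventually_neq_at_within[of 0 0]]) (simp add: power2_eq_square)
  have "(\<lambda>x::complex. x^2 * (1 / ((1 - 1 * (1 - x)) * (1 - inverse 1 * (1 - x))))) has_laurent_expansion fps_to_fls 1"
    using has_laurent_expansion_cong[OF ev, of 1 "fps_to_fls 1"] by simp
  moreover have "symplectic_fps 1" unfolding symplectic_fps_def by simp
  ultimately show ?thesis unfolding symplectic_at_def by blast
qed

theorem lemma6p1:
  fixes l :: complex
  assumes "l \<noteq> 0"
  shows "symplectic_at (\<lambda>t. 1 / ((1 - l * t) * (1 - inverse l * t))) 1 2"
proof (cases "l = 1")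
  case True then show ?thesis using main_1 by simp
next
  case False then show ?thesis using main_ne1 assms by blast
qed

end
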